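(* Let $n$ be odd. Then $$M_{Q_{4n}}\!\Big(1+(x^n+1)(x+x^2+\cdots+x^{(n-1)/2})+y\,(x^n+1)(x+x^2+\cdots+x^{(n-1)/2})\Big)=2n-1,$$ and $M_{Q_{4n}}(x^2+1)=16$. In particular $\lambda(Q_{4n})\le\min\{16,2n-1\}$ whenever $n\ge 3$ is odd.
   Context: $Q_{4n}=\langle x,y : x^{2n}=1,\ y^2=x^n,\ xy=yx^{-1}\rangle$. For $f,g\in\mathbb Z[x]$, $M_{Q_{4n}}(f+yg)=\prod_{z^{2n}=1}\big(f(z)f(z^{-1})-z^ng(z)g(z^{-1})\big)$ (the integer group determinant of $Q_{4n}$). $\lambda(G)$ is the smallest absolute value $\ge2$ of an integer group determinant of $G$. *)

theory Defs
  imports "HOL-Computational_Algebra.Polynomial" Complex_Main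
begin

definition ipoly :: "int poly \<Rightarrow> complex \<Rightarrow> complex" where
  "ipoly p z = poly (map_poly of_int p) z"

text \<open>Integer group determinant of Q_{4n} of the group ring element f + y g:
  product over all 2n-th roots of unity z of f(z)f(z^-1) - z^n g(z)g(z^-1).\<close>
definition M_Q :: "nat \<Rightarrow> int poly \<Rightarrow> int poly \<Rightarrow> complex" where
  "M_Q n f g = (\<Prod>z\<in>{z::complex. z ^ (2*n) = 1}.
      ipoly f z * ipoly f (inverse z) - z ^ n * ipoly g z * ipoly g (inverse z))"

definition lambda_Q :: "nat \<Rightarrow> nat" where
  "lambda_Q n = (LEAST k. 2 \<le> k \<and> (\<exists>f g. cmod (M_Q n f g) = real k))"

end

theory Submission imports Defs "HOL-Computational_Algebra.Fundamental_Theorem_Algebra" begin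
lemma mp_add: "map_poly (of_int::int\<Rightarrow>complex) (p+q) = map_poly of_int p + map_poly of_int q"
  by (rule poly_eqI) (simp add: coeff_map_poly)
lemma mp_mult: "map_poly (of_int::int\<Rightarrow>complex) (p*q) = map_poly of_int p * map_poly of_int q"
  by (rule poly_eqI) (simp add: coeff_map_poly coeff_mult)
lemma ipoly_sum: "finite A \<Longrightarrow> ipoly (\<Sum>k\<in>A. monom 1 k) z = (\<Sum>k\<in>A. z ^ k)"
  by (induction A rule: finite_induct) (simp_all add: ipoly_def mp_add poly_monom map_poly_monom)
lemma ipoly_simps:
  "ipoly (p + q) z = ipoly p z + ipoly q z"
  "ipoly (p * q) z = ipoly p z * ipoly q z"
  "ipoly (monom 1 n) z = z ^ n"
  "ipoly 1 z = 1" "ipoly 0 z = 0"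
  by (simp_all add: ipoly_def mp_add mp_mult poly_monom map_poly_monom)

lemma prod_roots_unity:
  assumes m: "m > 0"
  shows "(\<Prod>z\<in>{z::complex. z ^ m = 1}. x - z) = x ^ m - 1"
proof -
  define p :: "complex poly" where "p = [:-1:] + monom 1 m"
  have pz: "poly p z = z ^ m - 1" for z by (simp add: p_def poly_monom)
  have lc: "lead_coeff p = 1"
    using m unfolding p_def by (subst lead_coeff_add_le) (simp_all add: degree_monom_eq)
  have dp: "poly (pderiv p) z = of_nat m * z ^ (m - 1)" for z
    by (simp add: p_def pderiv_add pderiv_monom poly_monom)
  have "rsquarefree p"
    unfolding rsquarefree_roots
  proof (intro allI notI)
    fix a assume "poly p a = 0 \<and> poly (pderiv p) a = 0"
    then show False using m by (auto simp: pz dp power_0_left split: if_splits)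
  qed
  from complex_poly_decompose_rsquarefree[OF this]
  have "poly (smult (lead_coeff p) (\<Prod>z|poly p z = 0. [:-z, 1:])) x = poly p x" by simp
  then show ?thesis by (simp add: lc pz poly_prod)
qed

lemma Hsum:
  fixes z :: complex
  assumes n: "n = 2*m+1" and z: "z ^ n = 1"
  shows "(\<Sum>k\<in>{1..m}. z^k) + (\<Sum>k\<in>{1..m}. inverse z ^ k) = (\<Sum>k<n. z^k) - 1"
proof -
  have z0: "z \<noteq> 0" using z n by auto
  have inv: "inverse z ^ k = z ^ (n - k)" if "k \<le> n" for k
  proof -
    have "z ^ (n - k) * z ^ k = 1" using that z by (simp add: power_add[symmetric])
    then show ?thesis using z0 by (simp add: power_inverse field_simps)
  qed
  have "(\<Sum>k\<in>{1..m}. inverse z ^ k) = (\<Sum>k\<in>{1..m}. z ^ (n - k))"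
    using n by (intro sum.cong refl inv) auto
  also have "\<dots> = (\<Sum>k\<in>{m+1..n-1}. z ^ k)"
    by (rule sum.reindex_bij_witness[of _ "\<lambda>k. n - k" "\<lambda>k. n - k"]) (use n in auto)
  finally have 1: "(\<Sum>k\<in>{1..m}. inverse z ^ k) = (\<Sum>k\<in>{m+1..n-1}. z ^ k)" .
  have "(\<Sum>k\<in>{1..m}. z^k) + (\<Sum>k\<in>{m+1..n-1}. z ^ k) = (\<Sum>k\<in>{1..m} \<union> {m+1..n-1}. z ^ k)"
    by (rule sum.union_disjoint[symmetric]) auto
  also have "{1..m} \<union> {m+1..n-1} = {1..n-1}" using n by auto
  also have "(\<Sum>k\<in>{1..n-1}. z ^ k) = (\<Sum>k<n. z^k) - 1"
  proof -
    have "{..<n} = insert 0 {1..n-1}" using n by auto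
    then show ?thesis by simp
  qed
  finally show ?thesis using 1 by simp
qed

lemma geo_roots:
  fixes z :: complex
  assumes "z ^ n = 1" "z \<noteq> 1"
  shows "(\<Sum>k<n. z^k) = 0"
  using assms by (simp add: geometric_sum)

theorem mainTheorem8:
  fixes n :: nat
  assumes "odd n"
  defines "h \<equiv> (\<Sum>k\<in>{1..(n - 1) div 2}. monom (1::int) k)"
  shows "M_Q n (1 + (monom 1 n + 1) * h) ((monom 1 n + 1) * h) = of_int (2 * int n - 1)
         \<and> M_Q n (monom 1 2 + 1) 0 = 16
         \<and> (n \<ge> 3 \<longrightarrow> lambda_Q n \<le> min 16 (2 * n - 1))"
proof -
  define m where "m = (n - 1) div 2"
  have n: "n = 2*m+1" using assms(1) unfolding m_def by presburger
  define S where "S = {z::complex. z ^ (2*n) = 1}"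
  have finS: "finite S" unfolding S_def using n by (intro finite_roots_unity) auto
  have Sz: "z \<noteq> 0" if "z \<in> S" for z using that n by (auto simp: S_def)
  have Sn: "z ^ n = 1 \<or> z ^ n = -1" if "z \<in> S" for z
  proof -
    have "(z ^ n)^2 = 1" using that by (simp add: S_def power_mult[symmetric] mult.commute)
    then show ?thesis by (simp add: power2_eq_1_iff)
  qed
  have ih: "ipoly h z = (\<Sum>k\<in>{1..m}. z^k)" for z
    unfolding h_def m_def by (simp add: ipoly_sum)
  have invn: "inverse z ^ n = inverse (z ^ n)" for z :: complex by (simp add: power_inverse)
  have P1: "M_Q n (1 + (monom 1 n + 1) * h) ((monom 1 n + 1) * h) = of_int (2 * int n - 1)"
  proof -
    let ?T = "\<lambda>z. ipoly (1 + (monom 1 n + 1) * h) z * ipoly (1 + (monom 1 n + 1) * h) (inverse z) -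
        z ^ n * ipoly ((monom 1 n + 1) * h) z * ipoly ((monom 1 n + 1) * h) (inverse z)"
    have T: "?T z = (if z = 1 then of_int (2 * int n - 1) else if z ^ n = 1 then -1 else 1)"
      if zS: "z \<in> S" for z
    proof (cases "z ^ n = 1")
      case True
      have hs: "ipoly h z + ipoly h (inverse z) = (\<Sum>k<n. z^k) - 1"
        unfolding ih using Hsum[OF n True] by simp
      have "?T z = 1 + 2 * (ipoly h z + ipoly h (inverse z))"
        using True by (simp add: ipoly_simps invn algebra_simps)
      also have "\<dots> = (if z = 1 then of_int (2 * int n - 1) else -1)"
      proof -
        have s: "ipoly h z + ipoly h (inverse z) = (if z = 1 then of_nat n - 1 else -1)"
          using hs geo_roots[OF True] by auto
        show ?thesis
        proof (cases "z = 1")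
          case True
          with s have e: "ipoly h z + ipoly h (inverse z) = of_nat n - 1" by simp
          have "1 + 2 * (ipoly h z + ipoly h (inverse z)) = 1 + 2 * (of_nat n - 1)"
            by (simp only: e)
          also have "\<dots> = of_int (2 * int n - 1)" by simp
          finally show ?thesis using True by simp
        next
          case False
          with s have "ipoly h z + ipoly h (inverse z) = - 1" by simp
          then show ?thesis using False by (simp add: algebra_simps)
        qed
      qed
      finally show ?thesis using True by simp
    next
      case False
      then have m1: "z ^ n = -1" using Sn[OF zS] by auto
      have "?T z = 1" using m1 by (simp add: ipoly_simps invn)
      moreover have "z \<noteq> 1" using False by auto
      ultimately show ?thesis using False by simp
    qed
    have "M_Q n (1 + (monom 1 n + 1) * h) ((monom 1 n + 1) * h) = (\<Prod>z\<in>S. ?T z)"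
      unfolding M_Q_def S_def by simp
    also have "\<dots> = (\<Prod>z\<in>S. (if z = 1 then of_int (2 * int n - 1) else if z ^ n = 1 then -1 else 1))"
      by (rule prod.cong) (simp_all add: T)
    also have "\<dots> = of_int (2 * int n - 1) * (\<Prod>z\<in>S - {1}. (if z ^ n = 1 then -1 else 1))"
    proof -
      have "1 \<in> S" by (simp add: S_def)
      have "(\<Prod>z\<in>S. (if z = 1 then of_int (2 * int n - 1) else if z ^ n = 1 then -1 else 1 :: complex))
        = of_int (2 * int n - 1) * (\<Prod>z\<in>S - {1}. (if z = 1 then of_int (2 * int n - 1) else if z ^ n = 1 then -1 else 1))"
        by (rule prod.remove[OF finS \<open>1 \<in> S\<close>, THEN trans]) (simp only: if_True refl)
      also have "(\<Prod>z\<in>S - {1}. (if z = 1 then of_int (2 * int n - 1) else if z ^ n = 1 then -1 else 1 :: complex))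
         = (\<Prod>z\<in>S - {1}. (if z ^ n = 1 then -1 else 1))"
        by (rule prod.cong) auto
      finally show ?thesis .
    qed
    also have "(\<Prod>z\<in>S - {1}. (if z ^ n = 1 then -1 else 1 :: complex)) = (-1) ^ card ((S - {1}) \<inter> {z. z ^ n = 1})"
      using finS by (simp add: prod.If_cases)
    also have "(S - {1}) \<inter> {z. z ^ n = 1} = {z. z ^ n = 1} - {1}"
    proof -
      have "z ^ (2*n) = (z^n)^2" for z :: complex by (metis mult.commute power_mult)
      then show ?thesis by (auto simp: S_def)
    qed
    also have "card ({z::complex. z ^ n = 1} - {1}) = 2 * m"
    proof -
      have "card {z::complex. z ^ n = 1} = n" using n by (intro card_roots_unity_eq) simp
      moreover have "finite {z::complex. z ^ n = 1}" using n by (intro finite_roots_unity) simp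
      ultimately show ?thesis using n by (subst card_Diff_singleton) auto
    qed
    finally show ?thesis by simp
  qed
  have P2: "M_Q n (monom 1 2 + 1) 0 = 16"
  proof -
    have e: "(\<Prod>z\<in>S. z^2 + 1) = 4"
    proof -
      have "(\<Prod>z\<in>S. z^2 + 1) = (\<Prod>z\<in>S. (\<i> - z) * (-\<i> - z))"
        by (rule prod.cong) (auto simp: algebra_simps power2_eq_square)
      also have "\<dots> = (\<Prod>z\<in>S. \<i> - z) * (\<Prod>z\<in>S. -\<i> - z)" by (rule prod.distrib)
      also have "\<dots> = (\<i> ^ (2*n) - 1) * ((-\<i>) ^ (2*n) - 1)"
      proof -
        have pos: "2*n > 0" using n by simp
        show ?thesis unfolding S_def by (simp only: prod_roots_unity[OF pos])
      qed
      also have "\<dots> = 4" using n by (simp add: power_mult)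
      finally show ?thesis .
    qed
    have e2: "(\<Prod>z\<in>S. inverse z ^2 + 1) = (\<Prod>z\<in>S. z^2 + 1)"
      by (rule prod.reindex_bij_witness[of _ inverse inverse])
         (auto simp: S_def power_inverse)
    have "M_Q n (monom 1 2 + 1) 0 = (\<Prod>z\<in>S. (z^2 + 1) * (inverse z ^ 2 + 1))"
      unfolding M_Q_def S_def by (simp add: ipoly_simps)
    also have "\<dots> = 16" by (simp add: prod.distrib e e2)
    finally show ?thesis .
  qed
  have P3: "lambda_Q n \<le> min 16 (2 * n - 1)" if "n \<ge> 3"
  proof -
    have a: "lambda_Q n \<le> 16" unfolding lambda_Q_def
      by (rule Least_le, intro conjI exI[of _ "monom 1 2 + 1"] exI[of _ 0]) (simp_all add: P2)
    have b: "lambda_Q n \<le> 2 * n - 1" unfolding lambda_Q_def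
    proof (rule Least_le, intro conjI exI)
      show "2 \<le> 2 * n - 1" using that by simp
      have "M_Q n (1 + (monom 1 n + 1) * h) ((monom 1 n + 1) * h) = complex_of_real (real (2 * n - 1))"
        using P1 that by (simp add: of_nat_diff)
      then show "cmod (M_Q n (1 + (monom 1 n + 1) * h) ((monom 1 n + 1) * h)) = real (2 * n - 1)"
        by (simp only: norm_of_real abs_of_nat)
    qed
    show ?thesis using a b by simp
  qed
  show ?thesis using P1 P2 P3 by blast
qed
end
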